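(* For all ordered graphs $G_1$ and $G_2$, $$r_o(G_1,G_2)\;\ge\;\frac14\min\Big\{\Delta^-(G_1)\big(\Delta^-(G_1)-1\big),\ \Delta^+(G_2)\big(\Delta^+(G_2)-1\big)\Big\}.$$
   Context: An ordered graph $G$ on $n$ vertices has vertex set $[n]=\{1,\dots,n\}$ with the natural linear order. An ordered graph $G$ on $[n]$ is contained in an ordered graph $H$ on a linearly ordered vertex set if there is an injective map $f$ from $[n]$ to $V(H)$ with $f(i)<f(j)$ whenever $i<j$ and $f(i)f(j)\in E(H)$ whenever $ij\in E(G)$; such an image is an ordered copy of $G$. For a vertex $v$ of an ordered graph, the left degree $d^-(v)$ is the number of neighbors $u$ of $v$ with $u<v$, and the right degree $d^+(v)$ is the number of neighbors $u$ with $u>v$; $\Delta^-(G)$ and $\Delta^+(G)$ denote the maxima of $d^-$ and $d^+$ over $V(G)$. The online ordered Ramsey game for $(G_1,G_2)$ is played by Builder and Painter on the vertex set $\mathbb N$ with its natural order. On each turn Builder selects a previously unselected pair of vertices (an edge) and Painter then colors it red or blue. Builder wins as soon as the colored edges contain an ordered red copy of $G_1$ or an ordered blue copy of $G_2$; Builder tries to minimize and Painter tries to maximize the number of turns. The online ordered Ramsey number $r_o(G_1,G_2)$ is the number of turns after which Builder wins when both players play optimally. *)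

theory Defs
  imports Main "HOL-Library.Extended_Real"
begin

definition ordered_graph :: "nat \<Rightarrow> (nat \<times> nat) set \<Rightarrow> bool" where
  "ordered_graph n E \<longleftrightarrow> (\<forall>(i,j)\<in>E. 1 \<le> i \<and> i < j \<and> j \<le> n)"

definition contains_ordered :: "nat \<Rightarrow> (nat \<times> nat) set \<Rightarrow> (nat \<times> nat) set \<Rightarrow> bool" where
  "contains_ordered n E H \<longleftrightarrow>
     (\<exists>f :: nat \<Rightarrow> nat. (\<forall>i j. 1 \<le> i \<longrightarrow> i < j \<longrightarrow> j \<le> n \<longrightarrow> f i < f j)
        \<and> (\<forall>(i,j)\<in>E. (f i, f j) \<in> H))"

definition left_deg :: "(nat \<times> nat) set \<Rightarrow> nat \<Rightarrow> nat" where
  "left_deg E v = card {u. (u,v) \<in> E}"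

definition right_deg :: "(nat \<times> nat) set \<Rightarrow> nat \<Rightarrow> nat" where
  "right_deg E v = card {u. (v,u) \<in> E}"

definition max_left_deg :: "nat \<Rightarrow> (nat \<times> nat) set \<Rightarrow> nat" where
  "max_left_deg n E = Max (insert 0 (left_deg E ` {1..n}))"

definition max_right_deg :: "nat \<Rightarrow> (nat \<times> nat) set \<Rightarrow> nat" where
  "max_right_deg n E = Max (insert 0 (right_deg E ` {1..n}))"

datatype colour = Red | Blue

text \<open>A game position: the colouring of the edges selected so far (None = not yet selected).
  Edges of the board on nat are pairs (u,v) with u < v.\<close>
type_synonym position = "nat \<times> nat \<Rightarrow> colour option"

definition builder_won :: "nat \<Rightarrow> (nat \<times> nat) set \<Rightarrow> nat \<Rightarrow> (nat \<times> nat) set \<Rightarrow> position \<Rightarrow> bool" where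
  "builder_won n1 E1 n2 E2 C \<longleftrightarrow>
     contains_ordered n1 E1 {e. C e = Some Red} \<or> contains_ordered n2 E2 {e. C e = Some Blue}"

primrec builder_wins_within ::
  "nat \<Rightarrow> (nat \<times> nat) set \<Rightarrow> nat \<Rightarrow> (nat \<times> nat) set \<Rightarrow> nat \<Rightarrow> position \<Rightarrow> bool" where
  "builder_wins_within n1 E1 n2 E2 0 C = builder_won n1 E1 n2 E2 C"
| "builder_wins_within n1 E1 n2 E2 (Suc k) C =
     (builder_won n1 E1 n2 E2 C \<or>
      (\<exists>u v. u < v \<and> C (u,v) = None \<and>
         (\<forall>c. builder_wins_within n1 E1 n2 E2 k (C((u,v) := Some c)))))"

definition online_ordered_ramsey ::
  "nat \<Rightarrow> (nat \<times> nat) set \<Rightarrow> nat \<Rightarrow> (nat \<times> nat) set \<Rightarrow> ereal" where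
  "online_ordered_ramsey n1 E1 n2 E2 =
     (if \<exists>k. builder_wins_within n1 E1 n2 E2 k (\<lambda>_. None)
      then ereal (real (LEAST k. builder_wins_within n1 E1 n2 E2 k (\<lambda>_. None)))
      else \<infinity>)"

end

theory Submission
  imports Defs
begin

definition RL :: "position \<Rightarrow> nat \<Rightarrow> nat set" where
  "RL C w = {x. C (x,w) = Some Red}"

definition inv :: "nat \<Rightarrow> position \<Rightarrow> bool" where
  "inv a C \<longleftrightarrow> finite {e. C e \<noteq> None} \<and> (\<forall>v. card (RL C v) \<le> a - 1)
     \<and> (\<forall>u w. C (u,w) = Some Blue \<longrightarrow> a - 1 \<le> card (RL C w))"

lemma finite_RL: assumes "finite {e. C e \<noteq> None}" shows "finite (RL C w)"
proof -
  have "RL C w \<subseteq> fst ` {e. C e \<noteq> None}" unfolding RL_def by force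
  thus ?thesis using assms finite_subset by blast
qed

lemma finite_L: assumes "finite {e. C e \<noteq> None}" shows "finite {x. C (x,w) \<noteq> None}"
proof -
  have "{x. C (x,w) \<noteq> None} \<subseteq> fst ` {e. C e \<noteq> None}" by force
  thus ?thesis using assms finite_subset by blast
qed

lemma inv_step:
  assumes "inv a C" "C (u,v) = None"
  defines "c \<equiv> (if card (RL C v) < a - 1 then Red else Blue)"
  shows "inv a (C((u,v) := Some c))"
proof -
  let ?C = "C((u,v) := Some c)"
  have fin: "finite {e. C e \<noteq> None}" using assms unfolding inv_def by auto
  have fin1: "finite {e. ?C e \<noteq> None}"
  proof -
    have "{e. ?C e \<noteq> None} \<subseteq> insert (u,v) {e. C e \<noteq> None}" by auto
    thus ?thesis using fin finite_subset by blast
  qed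
  have sub: "RL C w \<subseteq> RL ?C w" for w using assms(2) unfolding RL_def by auto
  have mono: "card (RL C w) \<le> card (RL ?C w)" for w
    using sub finite_RL[OF fin1] card_mono by blast
  show ?thesis
  proof (cases "card (RL C v) < a - 1")
    case True
    hence cR: "c = Red" unfolding c_def by simp
    have A: "card (RL ?C w) \<le> a - 1" for w
    proof (cases "w = v")
      case True
      have "RL ?C w \<subseteq> insert u (RL C v)" using True cR unfolding RL_def by auto
      hence "card (RL ?C w) \<le> card (insert u (RL C v))"
        using finite_RL[OF fin] card_mono by (metis finite_insert)
      also have "\<dots> \<le> Suc (card (RL C v))" by (simp add: card_insert_le_m1)
      finally show ?thesis using \<open>card (RL C v) < a - 1\<close> by simp
    next
      case False
      hence "RL ?C w = RL C w" unfolding RL_def by auto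
      thus ?thesis using assms(1) unfolding inv_def by auto
    qed
    have B: "a - 1 \<le> card (RL ?C w)" if "?C (u',w) = Some Blue" for u' w
    proof -
      have "C (u',w) = Some Blue" using that cR by (auto split: if_splits)
      hence "a - 1 \<le> card (RL C w)" using assms(1) unfolding inv_def by auto
      thus ?thesis using mono[of w] by linarith
    qed
    show ?thesis unfolding inv_def using fin1 A B by blast
  next
    case False
    hence cB: "c = Blue" unfolding c_def by simp
    have eq: "RL ?C w = RL C w" for w using cB assms(2) unfolding RL_def by auto
    have B: "a - 1 \<le> card (RL ?C w)" if "?C (u',w) = Some Blue" for u' w
    proof (cases "(u',w) = (u,v)")
      case True thus ?thesis using False eq by auto
    next
      case False
      hence "C (u',w) = Some Blue" using that by auto
      thus ?thesis using assms(1) eq unfolding inv_def by auto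
    qed
    show ?thesis unfolding inv_def using fin1 B eq assms(1) unfolding inv_def by auto
  qed
qed

lemma game:
  assumes "inv a C" "builder_wins_within n1 E1 n2 E2 k C"
  shows "\<exists>C'. inv a C' \<and> builder_won n1 E1 n2 E2 C' \<and>
           card {e. C' e \<noteq> None} \<le> card {e. C e \<noteq> None} + k"
  using assms
proof (induction k arbitrary: C)
  case 0
  then show ?case by auto
next
  case (Suc k)
  show ?case
  proof (cases "builder_won n1 E1 n2 E2 C")
    case True thus ?thesis using Suc.prems by auto
  next
    case False
    then obtain u v where uv: "u < v" "C (u,v) = None"
      "\<forall>c. builder_wins_within n1 E1 n2 E2 k (C((u,v) := Some c))"
      using Suc.prems(2) by auto
    define c where "c = (if card (RL C v) < a - 1 then Red else Blue)"
    let ?C = "C((u,v) := Some c)"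
    have i: "inv a ?C" using inv_step[OF Suc.prems(1) uv(2)] c_def by simp
    have fin: "finite {e. C e \<noteq> None}" using Suc.prems unfolding inv_def by auto
    have "{e. ?C e \<noteq> None} = insert (u,v) {e. C e \<noteq> None}" by auto
    hence cc: "card {e. ?C e \<noteq> None} = Suc (card {e. C e \<noteq> None})"
      using fin uv(2) by simp
    from Suc.IH[OF i uv(3)[rule_format, of c]] obtain C' where
      "inv a C'" "builder_won n1 E1 n2 E2 C'"
      "card {e. C' e \<noteq> None} \<le> card {e. ?C e \<noteq> None} + k" by blast
    thus ?thesis using cc by (intro exI[of _ C']) auto
  qed
qed


lemma max_attained:
  assumes "Max (insert 0 (g ` {1..(n::nat)})) = (a::nat)" "a \<ge> 1"
  shows "\<exists>v\<in>{1..n}. g v = a"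
proof -
  have "Max (insert 0 (g ` {1..n})) \<in> insert 0 (g ` {1..n})" by (rule Max_in) auto
  hence "a \<in> insert 0 (g ` {1..n})" using assms(1) by simp
  thus ?thesis using assms(2) by auto
qed

lemma mono_inj:
  fixes f :: "nat \<Rightarrow> nat" and n :: nat
  assumes "\<forall>i j. 1 \<le> i \<longrightarrow> i < j \<longrightarrow> j \<le> n \<longrightarrow> f i < (f j::nat)"
  shows "inj_on f {1..n}"
  unfolding inj_on_def
proof (intro ballI impI)
  fix x y :: nat assume x: "x \<in> {1..n}" and y: "y \<in> {1..n}" and e: "f x = f y"
  have 1: "x < y \<Longrightarrow> f x < f y" using assms x y by auto
  have 2: "y < x \<Longrightarrow> f y < f x" using assms x y by auto
  show "x = y"
  proof (cases x y rule: linorder_cases)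
    case less with 1 e show ?thesis by simp
  next
    case equal thus ?thesis .
  next
    case greater with 2 e show ?thesis by simp
  qed
qed

lemma won_bound:
  assumes og1: "ordered_graph n1 E1" and og2: "ordered_graph n2 E2"
    and I: "inv a C" and W: "builder_won n1 E1 n2 E2 C"
    and a: "max_left_deg n1 E1 = a" and b: "max_right_deg n2 E2 = b" and a1: "a \<ge> 1"
  shows "a * b \<le> card {e. C e \<noteq> None}"
proof -
  have fin: "finite {e. C e \<noteq> None}" using I unfolding inv_def by auto
  have noRed: "\<not> contains_ordered n1 E1 {e. C e = Some Red}"
  proof
    assume "contains_ordered n1 E1 {e. C e = Some Red}"
    then obtain f where fm: "\<forall>i j. 1 \<le> i \<longrightarrow> i < j \<longrightarrow> j \<le> n1 \<longrightarrow> f i < f j"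
      and fe: "\<forall>(i,j)\<in>E1. (f i, f j) \<in> {e. C e = Some Red}" unfolding contains_ordered_def by blast
    obtain v where v: "v \<in> {1..n1}" "left_deg E1 v = a"
      using max_attained[OF a[unfolded max_left_deg_def] a1] by blast
    let ?S = "{u. (u,v) \<in> E1}"
    have cS: "card ?S = a" using v unfolding left_deg_def by simp
    have Ssub: "?S \<subseteq> {1..n1}" using og1 unfolding ordered_graph_def by auto
    have "inj_on f ?S" using mono_inj[OF fm] Ssub inj_on_subset by blast
    hence c1: "card (f ` ?S) = a" using cS card_image by metis
    have "f ` ?S \<subseteq> RL C (f v)" using fe unfolding RL_def by auto
    hence "card (f ` ?S) \<le> card (RL C (f v))" using finite_RL[OF fin] card_mono by blast
    moreover have "card (RL C (f v)) \<le> a - 1" using I unfolding inv_def by auto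
    ultimately show False using c1 a1 by linarith
  qed
  show ?thesis
  proof (cases "b = 0")
    case True thus ?thesis by simp
  next
    case False
    hence b1: "b \<ge> 1" by simp
    have "contains_ordered n2 E2 {e. C e = Some Blue}" using W noRed unfolding builder_won_def by blast
    then obtain f where fm: "\<forall>i j. 1 \<le> i \<longrightarrow> i < j \<longrightarrow> j \<le> n2 \<longrightarrow> f i < f j"
      and fe: "\<forall>(i,j)\<in>E2. (f i, f j) \<in> {e. C e = Some Blue}" unfolding contains_ordered_def by blast
    obtain v where v: "v \<in> {1..n2}" "right_deg E2 v = b"
      using max_attained[OF b[unfolded max_right_deg_def] b1] by blast
    let ?T = "{u. (v,u) \<in> E2}"
    have cT: "card ?T = b" using v unfolding right_deg_def by simp
    have Tsub: "?T \<subseteq> {1..n2}" using og2 unfolding ordered_graph_def by auto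
    have "inj_on f ?T" using mono_inj[OF fm] Tsub inj_on_subset by blast
    hence cW: "card (f ` ?T) = b" using cT card_image by metis
    have finT: "finite ?T" using cT b1 card.infinite by fastforce
    let ?W = "f ` ?T"
    let ?L = "\<lambda>w. {x. C (x,w) \<noteq> None}"
    have blue: "C (f v, w) = Some Blue" if "w \<in> ?W" for w using fe that by auto
    have Lw: "a \<le> card (?L w)" if "w \<in> ?W" for w
    proof -
      have bl: "C (f v, w) = Some Blue" using blue that .
      have "a - 1 \<le> card (RL C w)" using I bl unfolding inv_def by blast
      moreover have "insert (f v) (RL C w) \<subseteq> ?L w" using bl unfolding RL_def by auto
      moreover have "f v \<notin> RL C w" using bl unfolding RL_def by auto
      moreover have "card (insert (f v) (RL C w)) = Suc (card (RL C w))"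
        using finite_RL[OF fin] \<open>f v \<notin> RL C w\<close> by simp
      moreover have "card (insert (f v) (RL C w)) \<le> card (?L w)"
        using finite_L[OF fin] \<open>insert (f v) (RL C w) \<subseteq> ?L w\<close> by (rule card_mono)
      ultimately have "Suc (a - 1) \<le> card (?L w)" by linarith
      thus ?thesis using a1 by simp
    qed
    have "a * b = (\<Sum>w\<in>?W. a)" using cW by simp
    also have "\<dots> \<le> (\<Sum>w\<in>?W. card (?L w))" using Lw by (intro sum_mono) auto
    also have "\<dots> = card (Sigma ?W ?L)" using finT finite_L[OF fin] by (subst card_SigmaI) auto
    also have "\<dots> = card ((\<lambda>(w,x). (x,w)) ` Sigma ?W ?L)"
      by (rule card_image[symmetric]) (auto simp: inj_on_def)
    also have "\<dots> \<le> card {e. C e \<noteq> None}"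
      by (rule card_mono[OF fin]) auto
    finally show ?thesis .
  qed
qed

theorem theorem3:
  fixes n1 n2 :: nat and E1 E2 :: "(nat \<times> nat) set"
  assumes "ordered_graph n1 E1" and "ordered_graph n2 E2"
  shows "ereal ((1/4) * min (real (max_left_deg n1 E1) * (real (max_left_deg n1 E1) - 1))
                            (real (max_right_deg n2 E2) * (real (max_right_deg n2 E2) - 1)))
         \<le> online_ordered_ramsey n1 E1 n2 E2"
proof (cases "\<exists>k. builder_wins_within n1 E1 n2 E2 k (\<lambda>_. None)")
  case False thus ?thesis unfolding online_ordered_ramsey_def by simp
next
  case True
  define a where "a = max_left_deg n1 E1"
  define b where "b = max_right_deg n2 E2"
  define k where "k = (LEAST k. builder_wins_within n1 E1 n2 E2 k (\<lambda>_. None))"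
  have kw: "builder_wins_within n1 E1 n2 E2 k (\<lambda>_. None)"
    unfolding k_def using True LeastI_ex by metis
  have val: "online_ordered_ramsey n1 E1 n2 E2 = ereal (real k)"
    unfolding online_ordered_ramsey_def k_def using True by simp
  have bnd: "(1/4) * min (real a * (real a - 1)) (real b * (real b - 1)) \<le> real k"
  proof (cases "a = 0")
    case True
    have "real b * (real b - 1) \<ge> 0" by (cases b) auto
    thus ?thesis using True by simp
  next
    case False
    have i0: "inv a (\<lambda>_. None)" unfolding inv_def RL_def by simp
    obtain C' where C': "inv a C'" "builder_won n1 E1 n2 E2 C'"
      "card {e. C' e \<noteq> None} \<le> card {e::nat\<times>nat. (\<lambda>_. None :: colour option) e \<noteq> None} + k"
      using game[OF i0 kw] by (elim exE conjE) (rule that, assumption+)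
    have "a * b \<le> card {e. C' e \<noteq> None}"
      using won_bound[OF assms C'(1,2) a_def[symmetric] b_def[symmetric]] False by simp
    hence ab: "real a * real b \<le> real k" using C'(3) by (simp flip: of_nat_mult)
    have "min (real a * (real a - 1)) (real b * (real b - 1)) \<le> real a * real b"
    proof (cases "a \<le> b")
      case True
      hence "real a * (real a - 1) \<le> real a * real b" by (intro mult_left_mono) auto
      thus ?thesis by linarith
    next
      case False
      hence "real b - 1 \<le> real a" by simp
      hence "real b * (real b - 1) \<le> real b * real a" by (intro mult_left_mono) auto
      hence "real b * (real b - 1) \<le> real a * real b" by (simp add: mult.commute)
      thus ?thesis by linarith
    qed
    moreover have "real a * real b \<ge> 0" by simp
    ultimately show ?thesis using ab by linarith
  qed
  show ?thesis unfolding val using bnd a_def b_def by simp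
qed

end
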